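(* If $T\subseteq\mathbb{R}^n$ is an action set, then $\mathbf{W}(T)=\bigcap_{t\in T}\mathbf{W}(t)$ is a reaction set.
   Context: Single-commodity network pricing setting: $G=(\mathcal{V},\mathcal{A})$ directed graph, arc costs $c\ge0$, nonempty tolled arc set $\mathcal{A}_1\subsetneq\mathcal{A}$, $n=|\mathcal{A}_1|$, $N$ node–arc incidence matrix, single origin $o$ and destination $d$ connected by a path of arcs not in $\mathcal{A}_1$, $b_o=1$, $b_d=-1$, $b_i=0$ otherwise, $\mathcal{X}=\{x\in\mathbb{R}^{\mathcal{A}}: Nx=b,\ x\ge0\}$, $x_{\mathcal{A}_1}$ the restriction of $x$ to $\mathcal{A}_1$; tolls $t\in\mathbb{R}^n$ are extended by zeros to $\bar t\in\mathbb{R}^{\mathcal{A}}$. Let $f(t)=\min\{c^\top x+t^\top x_{\mathcal{A}_1}: x\in\mathcal{X}\}$ for $t\ge0$, $f(t)=-\infty$ otherwise, and $g(w)=\sup_{t\in\mathbb{R}^n}\{f(t)-t^\top w\}$. An action set is a set $T=\{t:(t,z)\in F\text{ for some }z\}$ where $F$ is a face of $\operatorname{epi}(-f)$ whose affine hull's direction space does not contain $(0,1)$ (non-vertical face); a reaction set is defined identically with $\operatorname{epi}(g)$ in place of $\operatorname{epi}(-f)$ (projection onto $w$-space of a non-vertical face of $\operatorname{epi}(g)$). For $t\ge0$, $\mathbf{W}(t)$ is the set of $w$ such that $(w,x)$ is optimal for some $x$ in the program $\min_{w,x}\{c^\top x+t^\top w: x_{\mathcal{A}_1}\le w,\ Nx=b,\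 w\ge0,\ x\ge0\}$. *)

theory Defs
  imports "HOL-Analysis.Analysis"
begin

text \<open>Directed graph with finite arc type 'e and finite node type 'v; arc a goes
from tlA a to hdA a.  Tolled arcs are indexed by a finite type 'n via an injective map
ta :: 'n \<Rightarrow> 'e, so A1 = range ta and tolls live in real^'n (n = CARD('n)).\<close>

definition incid :: "('e::finite \<Rightarrow> 'v::finite) \<Rightarrow> ('e \<Rightarrow> 'v) \<Rightarrow> real^'e^'v" where
  "incid tlA hdA = (\<chi> i a. (if tlA a = i then 1 else 0) - (if hdA a = i then 1 else 0))"

definition bvec :: "'v \<Rightarrow> 'v \<Rightarrow> real^'v" where
  "bvec orig dest = (\<chi> i. if i = orig then 1 else if i = dest then -1 else 0)"

definition flows :: "('e::finite \<Rightarrow> 'v::finite) \<Rightarrow> ('e \<Rightarrow> 'v) \<Rightarrow> 'v \<Rightarrow> 'v \<Rightarrow> (real^'e) set" where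
  "flows tlA hdA orig dest = {x. incid tlA hdA *v x = bvec orig dest \<and> (\<forall>a. 0 \<le> x $ a)}"

definition restr :: "('n::finite \<Rightarrow> 'e) \<Rightarrow> real^'e \<Rightarrow> real^'n" where
  "restr ta x = (\<chi> k. x $ ta k)"

definition fval :: "('e::finite \<Rightarrow> 'v::finite) \<Rightarrow> ('e \<Rightarrow> 'v) \<Rightarrow> 'v \<Rightarrow> 'v \<Rightarrow> real^'e \<Rightarrow> ('n::finite \<Rightarrow> 'e)
                     \<Rightarrow> real^'n \<Rightarrow> ereal" where
  "fval tlA hdA orig dest c ta t =
     (if (\<forall>k. 0 \<le> t $ k)
      then (INF x\<in>flows tlA hdA orig dest. ereal (c \<bullet> x + t \<bullet> restr ta x))
      else -\<infinity>)"

definition gval :: "('e::finite \<Rightarrow> 'v::finite) \<Rightarrow> ('e \<Rightarrow> 'v) \<Rightarrow> 'v \<Rightarrow> 'v \<Rightarrow> real^'e \<Rightarrow> ('n::finite \<Rightarrow> 'e)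
                     \<Rightarrow> real^'n \<Rightarrow> ereal" where
  "gval tlA hdA orig dest c ta w = (SUP t. fval tlA hdA orig dest c ta t - ereal (t \<bullet> w))"

definition nonvertical :: "(('a::real_vector) \<times> real) set \<Rightarrow> bool" where
  "nonvertical F \<longleftrightarrow> (0, 1) \<notin> {u - v | u v. u \<in> affine hull F \<and> v \<in> affine hull F}"

definition action_set :: "('e::finite \<Rightarrow> 'v::finite) \<Rightarrow> ('e \<Rightarrow> 'v) \<Rightarrow> 'v \<Rightarrow> 'v \<Rightarrow> real^'e \<Rightarrow> ('n::finite \<Rightarrow> 'e)
                     \<Rightarrow> (real^'n) set \<Rightarrow> bool" where
  "action_set tlA hdA orig dest c ta T \<longleftrightarrow>
     (\<exists>F. F face_of {(t, z). - fval tlA hdA orig dest c ta t \<le> ereal z} \<and> F \<noteq> {}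
          \<and> nonvertical F \<and> T = fst ` F)"

definition reaction_set :: "('e::finite \<Rightarrow> 'v::finite) \<Rightarrow> ('e \<Rightarrow> 'v) \<Rightarrow> 'v \<Rightarrow> 'v \<Rightarrow> real^'e \<Rightarrow> ('n::finite \<Rightarrow> 'e)
                     \<Rightarrow> (real^'n) set \<Rightarrow> bool" where
  "reaction_set tlA hdA orig dest c ta S \<longleftrightarrow>
     (\<exists>F. F face_of {(w, z). gval tlA hdA orig dest c ta w \<le> ereal z} \<and> F \<noteq> {}
          \<and> nonvertical F \<and> S = fst ` F)"

definition wfeas :: "('e::finite \<Rightarrow> 'v::finite) \<Rightarrow> ('e \<Rightarrow> 'v) \<Rightarrow> 'v \<Rightarrow> 'v \<Rightarrow> ('n::finite \<Rightarrow> 'e)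
                     \<Rightarrow> real^'n \<Rightarrow> real^'e \<Rightarrow> bool" where
  "wfeas tlA hdA orig dest ta w x \<longleftrightarrow>
     (\<forall>k. x $ ta k \<le> w $ k) \<and> incid tlA hdA *v x = bvec orig dest \<and> (\<forall>k. 0 \<le> w $ k) \<and> (\<forall>a. 0 \<le> x $ a)"

definition Wset :: "('e::finite \<Rightarrow> 'v::finite) \<Rightarrow> ('e \<Rightarrow> 'v) \<Rightarrow> 'v \<Rightarrow> 'v \<Rightarrow> real^'e \<Rightarrow> ('n::finite \<Rightarrow> 'e)
                     \<Rightarrow> real^'n \<Rightarrow> (real^'n) set" where
  "Wset tlA hdA orig dest c ta t =
     {w. \<exists>x. wfeas tlA hdA orig dest ta w x \<and>
            (\<forall>w' x'. wfeas tlA hdA orig dest ta w' x' \<longrightarrow> c \<bullet> x + t \<bullet> w \<le> c \<bullet> x' + t \<bullet> w')}"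

end

theory Submission
  imports Defs
begin


lemma lin_repr:
  fixes \<phi> :: "'a::euclidean_space \<Rightarrow> real"
  assumes "linear \<phi>"
  shows "\<phi> x = (\<Sum>b\<in>Basis. \<phi> b *\<^sub>R b) \<bullet> x"
proof -
  have "\<phi> x = \<phi> (\<Sum>b\<in>Basis. (x \<bullet> b) *\<^sub>R b)" by (simp add: euclidean_representation)
  also have "\<dots> = (\<Sum>b\<in>Basis. (x \<bullet> b) * \<phi> b)"
    using assms by (simp add: linear_sum linear_scale)
  also have "\<dots> = (\<Sum>b\<in>Basis. \<phi> b *\<^sub>R b) \<bullet> x"
    by (simp add: inner_sum_left inner_sum_right inner_commute mult.commute)
  finally show ?thesis .
qed

lemma polyhedron_lin_ge: assumes "linear \<phi>" shows "polyhedron {x::'a::euclidean_space. \<phi> x \<ge> (\<beta>::real)}"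
proof -
  define a where "a = (\<Sum>b\<in>Basis. \<phi> b *\<^sub>R b)"
  have e: "\<And>x. \<phi> x = a \<bullet> x" unfolding a_def by (rule lin_repr[OF assms])
  show ?thesis by (simp only: e polyhedron_halfspace_ge)
qed
lemma polyhedron_lin_eq: assumes "linear \<phi>" shows "polyhedron {x::'a::euclidean_space. \<phi> x = (\<beta>::real)}"
proof -
  define a where "a = (\<Sum>b\<in>Basis. \<phi> b *\<^sub>R b)"
  have e: "\<And>x. \<phi> x = a \<bullet> x" unfolding a_def by (rule lin_repr[OF assms])
  show ?thesis by (simp only: e polyhedron_hyperplane)
qed
lemma convex_lin_ge: assumes "linear \<phi>" shows "convex {x::'a::euclidean_space. \<phi> x \<ge> (\<beta>::real)}"
proof -
  define a where "a = (\<Sum>b\<in>Basis. \<phi> b *\<^sub>R b)"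
  have e: "\<And>x. \<phi> x = a \<bullet> x" unfolding a_def by (rule lin_repr[OF assms])
  show ?thesis by (simp only: e convex_halfspace_ge)
qed

lemma polyhedron_INT: "(\<And>i. polyhedron (S i)) \<Longrightarrow> polyhedron (\<Inter>i::'i::finite. S i)"
  by (rule polyhedron_Inter) auto

lemma restr_add: "restr ta (x + y) = restr ta x + restr ta y"
  by (simp add: restr_def vec_eq_iff)
lemma restr_scale: "restr ta (k *\<^sub>R x) = k *\<^sub>R restr ta x"
  by (simp add: restr_def vec_eq_iff)
lemma restr_zero[simp]: "restr ta 0 = 0"
  by (simp add: restr_def vec_eq_iff)
lemma restr_nth[simp]: "restr ta x $ k = x $ ta k"
  by (simp add: restr_def)
lemma restr_diff: "restr ta (x - y) = restr ta x - restr ta y"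
  by (simp add: restr_def vec_eq_iff)

lemma inner_nonneg_vec:
  fixes u v :: "real^'i::finite"
  shows "(\<forall>i. 0 \<le> u$i) \<Longrightarrow> (\<forall>i. 0 \<le> v$i) \<Longrightarrow> 0 \<le> u \<bullet> v"
  by (simp add: inner_vec_def sum_nonneg)

type_synonym ('e,'n) cq = "(real^'e) \<times> (real^'n) \<times> real \<times> real"

definition Cn :: "('e::finite \<Rightarrow> 'v::finite) \<Rightarrow> ('e \<Rightarrow> 'v) \<Rightarrow> 'v \<Rightarrow> 'v \<Rightarrow> ('e,'n::finite) cq set" where
  "Cn tlA hdA orig dest = {(x,s,r,l). incid tlA hdA *v x = l *\<^sub>R bvec orig dest \<and> (\<forall>a. 0 \<le> x$a)
       \<and> (\<forall>k. 0 \<le> s$k) \<and> 0 \<le> r \<and> 0 \<le> l}"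

definition sig :: "('e::finite,'n::finite) cq \<Rightarrow> real" where
  "sig q = sum (($) (fst q)) UNIV + sum (($) (fst (snd q))) UNIV + fst (snd (snd q)) + snd (snd (snd q))"

definition Qs where "Qs tlA hdA orig dest = Cn tlA hdA orig dest \<inter> {q. sig q = 1}"

lemma sig_scale: "sig (k *\<^sub>R q) = k * sig q"
  by (simp add: sig_def sum_distrib_left distrib_left)

lemma linear_sig: "linear sig"
  by (intro linearI) (simp_all add: sig_def sum.distrib sum_distrib_left distrib_left)

lemma Cn_scale: "q \<in> Cn tlA hdA orig dest \<Longrightarrow> 0 \<le> k \<Longrightarrow> k *\<^sub>R q \<in> Cn tlA hdA orig dest"
  by (cases q) (auto simp: Cn_def matrix_vector_mult_scaleR)

lemma sig_nonneg: "q \<in> Cn tlA hdA orig dest \<Longrightarrow> 0 \<le> sig q"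
  by (cases q) (auto simp: Cn_def sig_def intro!: add_nonneg_nonneg sum_nonneg)

lemma Cn_normalize: "q \<in> Cn tlA hdA orig dest \<Longrightarrow> 0 < sig q \<Longrightarrow> (1 / sig q) *\<^sub>R q \<in> Qs tlA hdA orig dest"
  by (auto simp: Qs_def sig_scale intro!: Cn_scale)

lemma polyhedron_Qs: "polyhedron (Qs tlA hdA orig dest)"
proof -
  let ?N = "incid tlA hdA" and ?B = "bvec orig dest"
  have eq: "Qs tlA hdA orig dest = 
     (\<Inter>i. {q::('a,'b) cq. (?N *v fst q) $ i - snd(snd(snd q)) * ?B $ i = 0})
     \<inter> (\<Inter>a. {q. fst q $ a \<ge> 0}) \<inter> (\<Inter>k. {q. fst (snd q) $ k \<ge> 0})
     \<inter> {q. fst (snd (snd q)) \<ge> 0} \<inter> {q. snd (snd (snd q)) \<ge> 0} \<inter> {q. sig q = 1}"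
    by (auto simp: Qs_def Cn_def vec_eq_iff)
  have l1: "linear (\<lambda>q::('a,'b) cq. (?N *v fst q) $ i - snd(snd(snd q)) * ?B $ i)" for i
    by (intro linearI) (simp_all add: matrix_vector_right_distrib matrix_vector_mult_scaleR algebra_simps)
  have l2: "linear (\<lambda>q::('a,'b) cq. fst q $ a)" for a
    by (intro linearI) simp_all
  have l3: "linear (\<lambda>q::('a,'b) cq. fst (snd q) $ a)" for a
    by (intro linearI) simp_all
  have l4: "linear (\<lambda>q::('a,'b) cq. fst (snd (snd q)))"
    by (intro linearI) simp_all
  have l5: "linear (\<lambda>q::('a,'b) cq. snd (snd (snd q)))"
    by (intro linearI) simp_all
  show ?thesis unfolding eq
    by (intro polyhedron_Int polyhedron_INT polyhedron_lin_eq polyhedron_lin_ge l1 l2 l3 l4 l5 linear_sig)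
qed

lemma bounded_Qs: "bounded (Qs tlA hdA orig dest)"
  unfolding bounded_iff
proof (intro exI ballI)
  fix q assume q: "q \<in> Qs tlA hdA orig dest"
  obtain x s r l where qq: "q = (x,s,r,l)" by (cases q)
  have nn: "\<forall>a. 0 \<le> x$a" "\<forall>k. 0 \<le> s$k" "0 \<le> r" "0 \<le> l" and s1: "sig q = 1"
    using q by (auto simp: Qs_def Cn_def qq)
  have "norm q \<le> norm x + norm (s,r,l)" unfolding qq by (rule norm_Pair_le)
  also have "norm (s,r,l) \<le> norm s + norm (r,l)" by (rule norm_Pair_le)
  also have "norm (r,l) \<le> norm r + norm l" by (rule norm_Pair_le)
  also have "norm x \<le> sum (\<lambda>i. \<bar>x$i\<bar>) UNIV" by (rule norm_le_l1_cart)
  also have "norm s \<le> sum (\<lambda>i. \<bar>s$i\<bar>) UNIV" by (rule norm_le_l1_cart)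
  finally have "norm q \<le> sum (\<lambda>i. \<bar>x$i\<bar>) UNIV + (sum (\<lambda>i. \<bar>s$i\<bar>) UNIV + (norm r + norm l))"
    by simp
  also have "\<dots> = sig q" using nn by (simp add: sig_def qq)
  finally show "norm q \<le> 1" using s1 by simp
qed

lemma polytope_Qs: "polytope (Qs tlA hdA orig dest)"
  using polyhedron_Qs bounded_Qs polytope_eq_bounded_polyhedron by blast



lemma fval_neg: "\<not> (\<forall>k. 0 \<le> t $ k) \<Longrightarrow> fval tlA hdA orig dest c ta t = -\<infinity>"
  unfolding fval_def by auto

lemma fval_le: "\<forall>k. 0 \<le> t $ k \<Longrightarrow> x \<in> flows tlA hdA orig dest \<Longrightarrow>
   fval tlA hdA orig dest c ta t \<le> ereal (c \<bullet> x + t \<bullet> restr ta x)"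
  unfolding fval_def by (auto intro: INF_lower)

lemma fval_ge: "\<forall>k. 0 \<le> t $ k \<Longrightarrow> (\<And>x. x \<in> flows tlA hdA orig dest \<Longrightarrow> m \<le> c \<bullet> x + t \<bullet> restr ta x) \<Longrightarrow>
   ereal m \<le> fval tlA hdA orig dest c ta t"
  unfolding fval_def by (auto intro: INF_greatest)

lemma gval_ge: "fval tlA hdA orig dest c ta t - ereal (t \<bullet> w) \<le> gval tlA hdA orig dest c ta w"
  unfolding gval_def by (rule SUP_upper) simp

lemma gval_lb: "ereal m \<le> fval tlA hdA orig dest c ta t \<Longrightarrow> ereal (m - t \<bullet> w) \<le> gval tlA hdA orig dest c ta w"
proof -
  assume "ereal m \<le> fval tlA hdA orig dest c ta t"
  then have "ereal m - ereal (t \<bullet> w) \<le> fval tlA hdA orig dest c ta t - ereal (t \<bullet> w)"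
    by (rule ereal_minus_mono) simp
  then show ?thesis using gval_ge[of tlA hdA orig dest c ta t w] by simp
qed

lemma gval_le: "(\<And>t. fval tlA hdA orig dest c ta t - ereal (t \<bullet> w) \<le> B) \<Longrightarrow> gval tlA hdA orig dest c ta w \<le> B"
  unfolding gval_def by (rule SUP_least)

lemma obj_nonneg: "\<forall>a. 0 \<le> c $ a \<Longrightarrow> \<forall>k. 0 \<le> t $ k \<Longrightarrow> x \<in> flows tlA hdA orig dest \<Longrightarrow> 0 \<le> c \<bullet> x + t \<bullet> restr ta x"
  by (intro add_nonneg_nonneg inner_nonneg_vec) (auto simp: flows_def)

lemma path_flow:
  assumes "(u,v) \<in> {(tlA a, hdA a) | a. a \<notin> range ta}\<^sup>*"
  shows "\<exists>x. (\<forall>a. 0 \<le> x$a) \<and> incid tlA hdA *v x = (\<chi> i. (if i = u then 1 else 0) - (if i = v then 1 else 0))"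
  using assms
proof (induction rule: rtrancl_induct)
  case base
  show ?case by (rule exI[of _ 0]) (simp add: vec_eq_iff)
next
  case (step y z)
  then obtain x where x: "\<forall>a. 0 \<le> x$a" "incid tlA hdA *v x = (\<chi> i. (if i = u then 1 else 0) - (if i = y then 1 else 0))"
    by blast
  from step obtain a where a: "y = tlA a" "z = hdA a" by blast
  have col: "incid tlA hdA *v axis a 1 = (\<chi> i. (if tlA a = i then 1 else 0) - (if hdA a = i then 1 else 0))"
    by (simp add: matrix_vector_mult_basis column_def incid_def)
  show ?case
    by (rule exI[of _ "x + axis a 1"])
       (use x col a in \<open>auto simp: matrix_vector_right_distrib vec_eq_iff axis_def\<close>)
qed

lemma flows_nonempty:
  assumes "orig \<noteq> dest" "(orig, dest) \<in> {(tlA a, hdA a) | a. a \<notin> range ta}\<^sup>*"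
  shows "flows tlA hdA orig dest \<noteq> {}"
proof -
  obtain x where "(\<forall>a. 0 \<le> x$a)" "incid tlA hdA *v x = (\<chi> i. (if i = orig then 1 else 0) - (if i = dest then 1 else 0))"
    using path_flow[OF assms(2)] by blast
  moreover have "(\<chi> i. (if i = orig then 1 else 0) - (if i = dest then 1 else 0)) = bvec orig dest"
    using assms(1) by (auto simp: bvec_def vec_eq_iff)
  ultimately show ?thesis by (auto simp: flows_def)
qed

lemma fval_real:
  assumes "\<forall>a. 0 \<le> c $ a" "\<forall>k. 0 \<le> t $ k" "flows tlA hdA orig dest \<noteq> {}"
  shows "fval tlA hdA orig dest c ta t = ereal (real_of_ereal (fval tlA hdA orig dest c ta t))"
proof -
  obtain x where x: "x \<in> flows tlA hdA orig dest" using assms(3) by blast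
  have "ereal 0 \<le> fval tlA hdA orig dest c ta t"
    using fval_ge[OF assms(2)] obj_nonneg[OF assms(1,2)] by blast
  moreover have "fval tlA hdA orig dest c ta t \<le> ereal (c \<bullet> x + t \<bullet> restr ta x)"
    by (rule fval_le[OF assms(2) x])
  ultimately show ?thesis by (cases "fval tlA hdA orig dest c ta t") auto
qed



lemma dualA:
  fixes w :: "real^'n::finite" and c :: "real^'e::finite" and tlA hdA :: "'e \<Rightarrow> 'v::finite"
  assumes cnn: "\<forall>a. 0 \<le> c $ a"
    and gw: "gval tlA hdA orig dest c ta w = ereal \<gamma>"
  shows "\<exists>x\<in>flows tlA hdA orig dest. (\<forall>k. x $ ta k \<le> w $ k) \<and> c \<bullet> x \<le> \<gamma>"
proof -
  let ?X = "flows tlA hdA orig dest"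
  let ?C = "Cn tlA hdA orig dest :: ('e,'n) cq set"
  let ?Q = "Qs tlA hdA orig dest :: ('e,'n) cq set"
  define L :: "('e,'n) cq \<Rightarrow> (real^'n) \<times> real \<times> real" where
    "L = (\<lambda>(x,s,r,l). (restr ta x - l *\<^sub>R w + s, c \<bullet> x + r, l))"
  have linL: "linear L"
    by (intro linearI) (auto simp: L_def restr_add restr_scale algebra_simps inner_add_right split: prod.splits)
  define D where "D = conic hull (L ` ?Q)"
  have clD: "closed D" unfolding D_def
    by (rule closed_conic_hull_strong) (simp add: polytope_linear_image[OF linL polytope_Qs])
  have cvD: "convex D" unfolding D_def
    by (rule convex_conic_hull, rule convex_linear_image[OF linL],
        rule polyhedron_imp_convex, rule polyhedron_Qs)
  have conD: "conic D" unfolding D_def by (rule conic_conic_hull)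
  have inD: "L q \<in> D" if "q \<in> ?C" "0 < sig q" for q
  proof -
    have "(1 / sig q) *\<^sub>R q \<in> ?Q" by (rule Cn_normalize[OF that])
    moreover have "L q = sig q *\<^sub>R L ((1 / sig q) *\<^sub>R q)"
      using that(2) by (simp add: linear_scale[OF linL])
    ultimately have "\<exists>k y. L q = k *\<^sub>R y \<and> 0 \<le> k \<and> y \<in> L ` ?Q"
      using that(2) by (intro exI[of _ "sig q"] exI[of _ "L ((1 / sig q) *\<^sub>R q)"]) auto
    then show ?thesis unfolding D_def conic_hull_explicit by blast
  qed
  have q0: "(0, 0, 1, 0) \<in> ?C" "sig (0::real^'e, 0::real^'n, 1::real, 0::real) = 1"
    by (auto simp: Cn_def sig_def)
  have zD: "0 \<in> D"
    using conicD[OF conD inD[OF q0(1)], of 0] q0(2) by simp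
  define p where "p = ((0::real^'n), \<gamma>, (1::real))"
  show ?thesis
  proof (cases "p \<in> D")
    case True
    then obtain k y where ky: "p = k *\<^sub>R y" "0 \<le> k" "y \<in> L ` ?Q"
      unfolding D_def conic_hull_explicit by blast
    then obtain q where q: "q \<in> ?Q" "y = L q" by blast
    have kq: "k *\<^sub>R q \<in> ?C" using q(1) ky(2) by (auto simp: Qs_def intro: Cn_scale)
    obtain x s r l where xs: "k *\<^sub>R q = (x,s,r,l)" by (cases "k *\<^sub>R q")
    have "p = L (x,s,r,l)" unfolding xs[symmetric] using ky q linear_scale[OF linL] by simp
    then have e: "restr ta x - l *\<^sub>R w + s = 0" "c \<bullet> x + r = \<gamma>" "l = 1"
      by (auto simp: p_def L_def)
    have nn: "incid tlA hdA *v x = l *\<^sub>R bvec orig dest" "\<forall>a. 0 \<le> x$a" "\<forall>k. 0 \<le> s$k" "0 \<le> r"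
      using kq by (auto simp: xs Cn_def)
    have "x \<in> ?X" using nn e(3) by (simp add: flows_def)
    moreover have "\<forall>k. x $ ta k \<le> w $ k"
    proof
      fix k
      have "(restr ta x - l *\<^sub>R w + s) $ k = 0" using e(1) by simp
      then show "x $ ta k \<le> w $ k" using nn(3) e(3) by (simp add: algebra_simps) (smt (verit) nn(3))
    qed
    moreover have "c \<bullet> x \<le> \<gamma>" using e(2) nn(4) by simp
    ultimately show ?thesis by blast
  next
    case False
    obtain a b where ab: "a \<bullet> p < b" "\<And>d. d \<in> D \<Longrightarrow> b < a \<bullet> d"
      using separating_hyperplane_closed_point[OF cvD clD False] by blast
    obtain \<tau> \<beta> \<mu> where a: "a = (\<tau>, \<beta>, \<mu>)" by (cases a) auto
    have b0: "b < 0" using ab(2)[OF zD] by simp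
    have ray: "0 \<le> a \<bullet> d" if "d \<in> D" for d
    proof (rule ccontr)
      assume "\<not> 0 \<le> a \<bullet> d"
      then have neg: "a \<bullet> d < 0" by simp
      define k where "k = b / (a \<bullet> d)"
      have "0 \<le> k" using neg b0 unfolding k_def by (simp add: divide_nonpos_neg)
      then have "b < a \<bullet> (k *\<^sub>R d)" using ab(2) conicD[OF conD that] by blast
      moreover have "a \<bullet> (k *\<^sub>R d) = b" using neg by (simp add: k_def)
      ultimately show False by simp
    qed
    have tau: "0 \<le> \<tau> $ k" for k
    proof -
      have "((0::real^'e), axis k (1::real), (0::real), (0::real)) \<in> ?C" by (auto simp: Cn_def axis_def)
      moreover have "sig ((0::real^'e), axis k (1::real), (0::real), (0::real)) = 1"
        by (simp add: sig_def axis_def)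
      ultimately have "0 \<le> a \<bullet> L ((0::real^'e), axis k (1::real), (0::real), (0::real))"
        using ray inD by simp
      then show ?thesis by (simp add: L_def a inner_axis)
    qed
    have beta: "0 \<le> \<beta>"
    proof -
      have "((0::real^'e), (0::real^'n), (1::real), (0::real)) \<in> ?C" by (auto simp: Cn_def)
      moreover have "sig ((0::real^'e), (0::real^'n), (1::real), (0::real)) = 1"
        by (simp add: sig_def)
      ultimately have "0 \<le> a \<bullet> L ((0::real^'e), (0::real^'n), (1::real), (0::real))"
        using ray inD by simp
      then show ?thesis by (simp add: L_def a)
    qed
    have xin: "b < \<tau> \<bullet> (restr ta x - w) + \<beta> * (c \<bullet> x) + \<mu>" if "x \<in> ?X" for x
    proof -
      have "(x, (0::real^'n), (0::real), (1::real)) \<in> ?C" using that by (auto simp: Cn_def flows_def)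
      moreover have "0 < sig (x, (0::real^'n), (0::real), (1::real))"
        using that by (auto simp: sig_def flows_def intro!: add_nonneg_pos sum_nonneg)
      ultimately have "b < a \<bullet> L (x, (0::real^'n), (0::real), (1::real))"
        using ab(2) inD by blast
      then show ?thesis by (simp add: L_def a)
    qed
    have pb: "\<beta> * \<gamma> + \<mu> < b" using ab(1) by (simp add: a p_def)
    show ?thesis
    proof (cases "\<beta> > 0")
      case True
      define t where "t = (1 / \<beta>) *\<^sub>R \<tau>"
      have t0: "\<forall>k. 0 \<le> t $ k" using tau True by (simp add: t_def)
      have "(b - \<mu>) / \<beta> + t \<bullet> w \<le> c \<bullet> x + t \<bullet> restr ta x" if "x \<in> ?X" for x
      proof -
        have "b - \<mu> < \<tau> \<bullet> (restr ta x - w) + \<beta> * (c \<bullet> x)" using xin[OF that] by simp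
        then have "(b - \<mu>) / \<beta> < (\<tau> \<bullet> (restr ta x - w) + \<beta> * (c \<bullet> x)) / \<beta>"
          using True by (simp add: divide_strict_right_mono)
        also have "\<dots> = t \<bullet> restr ta x - t \<bullet> w + c \<bullet> x"
          using True by (simp add: t_def inner_diff_right field_simps)
        finally show ?thesis by simp
      qed
      then have "ereal ((b - \<mu>) / \<beta> + t \<bullet> w) \<le> fval tlA hdA orig dest c ta t"
        by (intro fval_ge[OF t0]) auto
      from gval_lb[OF this, of w] have "ereal ((b - \<mu>) / \<beta>) \<le> ereal \<gamma>" using gw by simp
      moreover have "\<gamma> < (b - \<mu>) / \<beta>" using pb True by (simp add: field_simps)
      ultimately show ?thesis by simp
    next
      case False
      then have b0': "\<beta> = 0" using beta by simp
      define m where "m = b - \<mu>"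
      have m0: "0 < m" using pb b0' by (simp add: m_def)
      have bound: "k * m \<le> \<gamma>" if k0: "0 \<le> k" for k
      proof -
        define t where "t = k *\<^sub>R \<tau>"
        have t0: "\<forall>k. 0 \<le> t $ k" using tau k0 by (simp add: t_def)
        have "k * m + t \<bullet> w \<le> c \<bullet> x + t \<bullet> restr ta x" if "x \<in> ?X" for x
        proof -
          have "m < \<tau> \<bullet> (restr ta x - w)" using xin[OF that] b0' by (simp add: m_def)
          then have "k * m \<le> k * (\<tau> \<bullet> (restr ta x - w))" using k0 by (simp add: mult_left_mono)
          moreover have "0 \<le> c \<bullet> x" using cnn that by (intro inner_nonneg_vec) (auto simp: flows_def)
          ultimately show ?thesis by (simp add: t_def inner_diff_right algebra_simps)
        qed
        then have "ereal (k * m + t \<bullet> w) \<le> fval tlA hdA orig dest c ta t"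
          by (intro fval_ge[OF t0]) auto
        from gval_lb[OF this, of w] show ?thesis using gw by simp
      qed
      have "(\<bar>\<gamma>\<bar> + 1) / m * m \<le> \<gamma>" by (rule bound) (use m0 in simp)
      then show ?thesis using m0 by simp
    qed
  qed
qed



lemma polyhedron_epi:
  fixes c :: "real^'e::finite" and tlA hdA :: "'e \<Rightarrow> 'v::finite" and ta :: "'n::finite \<Rightarrow> 'e"
  assumes cnn: "\<forall>a. 0 \<le> c $ a"
  shows "polyhedron {(t, z). - fval tlA hdA orig dest c ta t \<le> ereal z}"
proof -
  let ?X = "flows tlA hdA orig dest"
  let ?C = "Cn tlA hdA orig dest :: ('e,'n) cq set"
  let ?Q = "Qs tlA hdA orig dest :: ('e,'n) cq set"
  obtain S where S: "finite S" "?Q = convex hull S" using polytope_Qs unfolding polytope_def by blast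
  define \<psi> :: "real^'n \<Rightarrow> real \<Rightarrow> ('e,'n) cq \<Rightarrow> real" where
    "\<psi> = (\<lambda>t z q. c \<bullet> fst q + t \<bullet> restr ta (fst q) + z * snd (snd (snd q)))"
  have linpsi: "linear (\<psi> t z)" for t z
    by (intro linearI) (simp_all add: \<psi>_def restr_add restr_scale inner_add_right algebra_simps)
  define E where "E = {(t, z). - fval tlA hdA orig dest c ta t \<le> ereal z}"
  have eq: "E = (\<Inter>k. {y::(real^'n) \<times> real. fst y $ k \<ge> 0}) \<inter> (\<Inter>q\<in>S. {y. \<psi> (fst y) (snd y) q \<ge> 0})"
  proof (intro equalityI subsetI)
    fix y assume "y \<in> E"
    then obtain t z where y: "y = (t,z)" and le: "- fval tlA hdA orig dest c ta t \<le> ereal z"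
      unfolding E_def by blast
    have t0: "\<forall>k. 0 \<le> t $ k"
      using le fval_neg[of t tlA hdA orig dest c ta] by (cases "\<forall>k. 0 \<le> t $ k") auto
    have "0 \<le> \<psi> t z q" if "q \<in> S" for q
    proof -
      obtain x s r l where q: "q = (x,s,r,l)" by (cases q)
      have "q \<in> ?C" using that S(2) hull_subset[of S convex] by (auto simp: Qs_def)
      then have nn: "incid tlA hdA *v x = l *\<^sub>R bvec orig dest" "\<forall>a. 0 \<le> x$a" "0 \<le> l"
        by (auto simp: Cn_def q)
      show ?thesis
      proof (cases "l = 0")
        case True
        have "0 \<le> c \<bullet> x" "0 \<le> t \<bullet> restr ta x" using cnn nn t0 by (auto intro!: inner_nonneg_vec)
        then show ?thesis using True by (simp add: \<psi>_def q)
      next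
        case False
        then have lp: "0 < l" using nn(3) by simp
        have xX: "(1 / l) *\<^sub>R x \<in> ?X"
          using nn lp by (auto simp: flows_def matrix_vector_mult_scaleR)
        have "fval tlA hdA orig dest c ta t \<le> ereal (c \<bullet> ((1 / l) *\<^sub>R x) + t \<bullet> restr ta ((1 / l) *\<^sub>R x))"
          by (rule fval_le[OF t0 xX])
        with le have "- z \<le> c \<bullet> ((1 / l) *\<^sub>R x) + t \<bullet> restr ta ((1 / l) *\<^sub>R x)"
          by (cases "fval tlA hdA orig dest c ta t") auto
        then have "- z \<le> (c \<bullet> x + t \<bullet> restr ta x) / l" by (simp add: restr_scale add_divide_distrib)
        then have "- z * l \<le> c \<bullet> x + t \<bullet> restr ta x" using lp by (simp add: pos_le_divide_eq)
        then show ?thesis by (simp add: \<psi>_def q)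
      qed
    qed
    then show "y \<in> (\<Inter>k. {y::(real^'n) \<times> real. fst y $ k \<ge> 0}) \<inter> (\<Inter>q\<in>S. {y. \<psi> (fst y) (snd y) q \<ge> 0})"
      using t0 by (simp add: y)
  next
    fix y assume y: "y \<in> (\<Inter>k. {y::(real^'n) \<times> real. fst y $ k \<ge> 0}) \<inter> (\<Inter>q\<in>S. {y. \<psi> (fst y) (snd y) q \<ge> 0})"
    obtain t z where yy: "y = (t,z)" by (cases y)
    have t0: "\<forall>k. 0 \<le> t $ k" using y by (simp add: yy)
    have "S \<subseteq> {q. \<psi> t z q \<ge> 0}" using y by (auto simp: yy)
    then have QS: "?Q \<subseteq> {q. \<psi> t z q \<ge> 0}" unfolding S(2)
      by (rule hull_minimal) (rule convex_lin_ge[OF linpsi])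
    have "- z \<le> c \<bullet> x + t \<bullet> restr ta x" if xX: "x \<in> ?X" for x
    proof -
      let ?q = "(x, (0::real^'n), (0::real), (1::real))"
      have qC: "?q \<in> ?C" using xX by (auto simp: Cn_def flows_def)
      have sp: "0 < sig ?q"
        using xX by (auto simp: sig_def flows_def intro!: add_nonneg_pos sum_nonneg)
      have "0 \<le> \<psi> t z ((1 / sig ?q) *\<^sub>R ?q)" using QS Cn_normalize[OF qC sp] by blast
      moreover have "\<psi> t z ((1 / sig ?q) *\<^sub>R ?q) = (1 / sig ?q) * \<psi> t z ?q"
        by (simp only: linear_scale[OF linpsi] real_scaleR_def)
      ultimately have "0 \<le> (1 / sig ?q) * \<psi> t z ?q" by simp
      then have "0 \<le> \<psi> t z ?q" using sp by (simp add: zero_le_divide_iff)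
      then show ?thesis by (simp add: \<psi>_def)
    qed
    then have "ereal (- z) \<le> fval tlA hdA orig dest c ta t" by (intro fval_ge[OF t0]) auto
    then show "y \<in> E" unfolding E_def yy by (simp add: ereal_uminus_le_reorder)
  qed
  have l1: "linear (\<lambda>y::(real^'n) \<times> real. fst y $ k)" for k by (intro linearI) simp_all
  have l2: "linear (\<lambda>y::(real^'n) \<times> real. \<psi> (fst y) (snd y) q - c \<bullet> fst q)" for q
    by (intro linearI) (simp_all add: \<psi>_def inner_add_left algebra_simps)
  have "polyhedron (\<Inter>q\<in>S. {y::(real^'n) \<times> real. \<psi> (fst y) (snd y) q \<ge> 0})"
  proof (rule polyhedron_Inter)
    show "finite ((\<lambda>q. {y::(real^'n) \<times> real. \<psi> (fst y) (snd y) q \<ge> 0}) ` S)" using S(1) by simp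
    fix P assume "P \<in> (\<lambda>q. {y::(real^'n) \<times> real. \<psi> (fst y) (snd y) q \<ge> 0}) ` S"
    then obtain q where P: "P = {y::(real^'n) \<times> real. \<psi> (fst y) (snd y) q \<ge> 0}" by blast
    have "P = {y. \<psi> (fst y) (snd y) q - c \<bullet> fst q \<ge> - (c \<bullet> fst q)}" unfolding P by auto
    then show "polyhedron P" using polyhedron_lin_ge[OF l2[of q], of "- (c \<bullet> fst q)"] by (simp only:)
  qed
  then have "polyhedron E" unfolding eq
    by (intro polyhedron_Int polyhedron_INT polyhedron_lin_ge l1)
  then show ?thesis unfolding E_def .
qed



theorem proposition2:
  fixes tlA hdA :: "'e::finite \<Rightarrow> 'v::finite"
    and c :: "real^'e" and ta :: "'n::finite \<Rightarrow> 'e" and orig dest :: 'v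
    and T :: "(real^'n) set"
  assumes c_nonneg: "\<forall>a. 0 \<le> c $ a"
    and ta_inj: "inj ta"
    and A1_proper: "range ta \<noteq> UNIV"
    and odestdistinct: "orig \<noteq> dest"
    and odestpath: "(orig, dest) \<in> {(tlA a, hdA a) | a. a \<notin> range ta}\<^sup>*"
    and T_action: "action_set tlA hdA orig dest c ta T"
  shows "reaction_set tlA hdA orig dest c ta (\<Inter>t\<in>T. Wset tlA hdA orig dest c ta t)"
proof -
  let ?X = "flows tlA hdA orig dest"
  let ?f = "fval tlA hdA orig dest c ta"
  let ?g = "gval tlA hdA orig dest c ta"
  define fr where "fr = (\<lambda>t. real_of_ereal (?f t))"
  define P where "P = {(t, z). - ?f t \<le> ereal z}"
  have Xne: "?X \<noteq> {}" by (rule flows_nonempty[OF odestdistinct odestpath])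
  have fr: "?f t = ereal (fr t)" if "\<forall>k. 0 \<le> t $ k" for t
    unfolding fr_def by (rule fval_real[OF c_nonneg that Xne])
  obtain F where F: "F face_of P" "F \<noteq> {}" "nonvertical F" "T = fst ` F"
    using T_action unfolding action_set_def P_def by blast
  have polyP: "polyhedron P" unfolding P_def by (rule polyhedron_epi[OF c_nonneg])
  have "F exposed_face_of P" using exposed_face_of_polyhedron[OF polyP] F(1) by blast
  then obtain a b where ab: "P \<subseteq> {y. a \<bullet> y \<le> b}" "F = P \<inter> {y. a \<bullet> y = b}"
    unfolding exposed_face_of_def by blast
  obtain a1 a2 where a: "a = (a1, a2)" by (cases a)
  obtain t0 z0 where tz0: "(t0, z0) \<in> F" using F(2) by auto
  have Pup: "(t, z') \<in> P" if "(t, z) \<in> P" "z \<le> z'" for t z z'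
    using that unfolding P_def by (auto intro: order_trans)
  have tz0P: "(t0, z0) \<in> P" "a1 \<bullet> t0 + a2 * z0 = b" using tz0 ab(2) a by auto
  have tz1P: "(t0, z0 + 1) \<in> P" using Pup[OF tz0P(1)] by simp
  have "a1 \<bullet> t0 + a2 * (z0 + 1) \<le> b" using tz1P ab(1) a by auto
  then have a2le: "a2 \<le> 0" using tz0P(2) by (simp add: algebra_simps)
  have a2ne: "a2 \<noteq> 0"
  proof
    assume a20: "a2 = 0"
    then have "(t0, z0 + 1) \<in> F" using tz1P tz0P(2) ab(2) a by auto
    then have "(t0, z0 + 1) - (t0, z0) \<in> {u - v | u v. u \<in> affine hull F \<and> v \<in> affine hull F}"
      using tz0 hull_subset[of F affine] by blast
    then show False using F(3) unfolding nonvertical_def by simp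
  qed
  define \<beta> where "\<beta> = - a2"
  have bpos: "0 < \<beta>" using a2le a2ne by (simp add: \<beta>_def)
  have TP: "\<forall>k. 0 \<le> t $ k" if tT: "t \<in> T" for t
  proof -
    obtain y where y: "y \<in> F" "t = fst y" using tT F(4) by blast
    have "(t, snd y) \<in> P" using y face_of_imp_subset[OF F(1)] by auto
    then obtain z where "(t, z) \<in> P" by blast
    then show ?thesis using fval_neg[of t tlA hdA orig dest c ta] unfolding P_def
      by (cases "\<forall>k. 0 \<le> t $ k") auto
  qed
  have key1: "fr t \<le> (b - a1 \<bullet> t) / \<beta>" if t0: "\<forall>k. 0 \<le> t $ k" for t
  proof -
    have "(t, - fr t) \<in> P" using fr[OF t0] unfolding P_def by simp
    then have "a1 \<bullet> t + a2 * (- fr t) \<le> b" using ab(1) a by auto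
    then have "\<beta> * fr t \<le> b - a1 \<bullet> t" by (simp add: \<beta>_def algebra_simps)
    then show ?thesis using bpos by (simp add: pos_le_divide_eq mult.commute)
  qed
  have key2: "fr t = (b - a1 \<bullet> t) / \<beta>" if tT: "t \<in> T" for t
  proof -
    obtain z where tz: "(t, z) \<in> F" using tT F(4) by auto
    then have "(t,z) \<in> P" "a1 \<bullet> t + a2 * z = b" using ab(2) a by auto
    then have "- ereal (fr t) \<le> ereal z" "a1 \<bullet> t - \<beta> * z = b"
      using fr[OF TP[OF tT]] by (auto simp: P_def \<beta>_def)
    then have "- fr t \<le> z" "z = (a1 \<bullet> t - b) / \<beta>" using bpos by (auto simp: field_simps)
    then have "(b - a1 \<bullet> t) / \<beta> \<le> fr t" using bpos by (simp add: divide_simps) 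
    with key1[OF TP[OF tT]] show ?thesis by simp
  qed
  define ws where "ws = - (1 / \<beta>) *\<^sub>R a1"
  have T0: "t0 \<in> T" using tz0 F(4) by force
  define Eg where "Eg = {(w, z). ?g w \<le> ereal z}"
  have Eg_eq: "Eg = (\<Inter>t\<in>{t. \<forall>k. 0 \<le> t $ k}. {y. (t, 1) \<bullet> y \<ge> fr t})"
  proof (intro equalityI subsetI)
    fix y assume "y \<in> Eg"
    then obtain w z where y: "y = (w,z)" "?g w \<le> ereal z" unfolding Eg_def by blast
    show "y \<in> (\<Inter>t\<in>{t. \<forall>k. 0 \<le> t $ k}. {y. (t, 1) \<bullet> y \<ge> fr t})"
    proof (intro INT_I CollectI)
      fix t :: "real^'n" assume "t \<in> {t. \<forall>k. 0 \<le> t $ k}"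
      then have "?f t = ereal (fr t)" using fr by blast
      then have "ereal (fr t - t \<bullet> w) \<le> ?g w" using gval_ge[of tlA hdA orig dest c ta t w] by simp
      then have "ereal (fr t - t \<bullet> w) \<le> ereal z" using y(2) by (rule order_trans)
      then show "fr t \<le> (t, 1) \<bullet> y" using y(1) by (simp add: algebra_simps)
    qed
  next
    fix y :: "(real^'n) \<times> real" assume y: "y \<in> (\<Inter>t\<in>{t. \<forall>k. 0 \<le> t $ k}. {y. (t, 1) \<bullet> y \<ge> fr t})"
    obtain w :: "real^'n" and z :: real where yy: "y = (w,z)" by (cases y)
    have "?g w \<le> ereal z"
    proof (rule gval_le)
      fix t :: "real^'n"
      show "?f t - ereal (t \<bullet> w) \<le> ereal z"
      proof (cases "\<forall>k. 0 \<le> t $ k")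
        case True
        then have "fr t \<le> t \<bullet> w + z" using y yy by auto
        then show ?thesis using fr[OF True] by simp
      next
        case False then show ?thesis using fval_neg[OF False, of tlA hdA orig dest c ta] by simp
      qed
    qed
    then show "y \<in> Eg" unfolding Eg_def yy by simp
  qed
  have cvEg: "convex Eg" unfolding Eg_eq by (intro convex_INT ballI convex_halfspace_ge)
  have supp: "(t, 1) \<bullet> y \<ge> fr t" if "y \<in> Eg" "t \<in> T" for y t
    using that TP Eg_eq by blast
  define G where "G = \<Inter> ((\<lambda>t. Eg \<inter> {y. (t, 1) \<bullet> y = fr t}) ` T)"
  have Gface: "G face_of Eg" unfolding G_def
    using T0 by (intro face_of_Inter) (auto intro!: face_of_Int_supporting_hyperplane_ge cvEg supp)
  have gws: "?g ws \<le> ereal (b / \<beta>)"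
  proof (rule gval_le)
    fix t :: "real^'n"
    show "?f t - ereal (t \<bullet> ws) \<le> ereal (b / \<beta>)"
    proof (cases "\<forall>k. 0 \<le> t $ k")
      case True
      have "fr t - t \<bullet> ws \<le> b / \<beta>" using key1[OF True] bpos
        by (simp add: ws_def divide_simps inner_commute) 
      then show ?thesis using fr[OF True] by simp
    next
      case False then show ?thesis using fval_neg[OF False, of tlA hdA orig dest c ta] by simp
    qed
  qed
  have Gne: "(ws, b / \<beta>) \<in> G"
    unfolding G_def Eg_def using gws key2 bpos
    by (auto simp: ws_def divide_simps inner_commute algebra_simps)
  have Gnv: "nonvertical G"
  proof -
    let ?H = "{y. (t0, 1) \<bullet> y = fr t0}"
    have "G \<subseteq> ?H" unfolding G_def using T0 by blast
    then have "affine hull G \<subseteq> ?H" by (intro hull_minimal affine_hyperplane)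
    moreover have "u - v \<noteq> (0, 1)" if "u \<in> ?H" "v \<in> ?H" for u v :: "(real^'n) \<times> real"
    proof
      assume "u - v = (0, 1)"
      then have "(t0, 1) \<bullet> (u - v) = 1" by (simp add: inner_real_def)
      moreover have "(t0, 1) \<bullet> (u - v) = 0" using that by (simp add: inner_diff_right)
      ultimately show False by simp
    qed
    ultimately have "\<forall>u v. u \<in> affine hull G \<longrightarrow> v \<in> affine hull G \<longrightarrow> u - v \<noteq> (0, 1)"
      by blast
    note nv = this
    show ?thesis unfolding nonvertical_def
    proof
      assume "(0, 1) \<in> {u - v |u v. u \<in> affine hull G \<and> v \<in> affine hull G}"
      then obtain u v where uv: "(0, 1) = u - v" "u \<in> affine hull G" "v \<in> affine hull G" by blast
      then show False using nv by metis
    qed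
  qed
  have Gproj: "(\<Inter>t\<in>T. Wset tlA hdA orig dest c ta t) = fst ` G"
  proof (intro equalityI subsetI)
    fix w assume wW: "w \<in> (\<Inter>t\<in>T. Wset tlA hdA orig dest c ta t)"
    have gup: "?g w \<le> ereal (fr t - t \<bullet> w)" if tT: "t \<in> T" for t
    proof -
      obtain x where x: "wfeas tlA hdA orig dest ta w x"
        "\<And>w' x'. wfeas tlA hdA orig dest ta w' x' \<Longrightarrow> c \<bullet> x + t \<bullet> w \<le> c \<bullet> x' + t \<bullet> w'"
        using wW tT unfolding Wset_def by blast
      have xX: "x \<in> ?X" using x(1) by (simp add: wfeas_def flows_def)
      have "ereal (c \<bullet> x + t \<bullet> w) \<le> ?f t"
      proof (rule fval_ge[OF TP[OF tT]])
        fix x' assume "x' \<in> ?X"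
        then have "wfeas tlA hdA orig dest ta (restr ta x') x'" by (auto simp: wfeas_def flows_def)
        then show "c \<bullet> x + t \<bullet> w \<le> c \<bullet> x' + t \<bullet> restr ta x'" by (rule x(2))
      qed
      then have A: "c \<bullet> x \<le> fr t - t \<bullet> w" using fr[OF TP[OF tT]] by simp
      have "?g w \<le> ereal (c \<bullet> x)"
      proof (rule gval_le)
        fix t' :: "real^'n"
        show "?f t' - ereal (t' \<bullet> w) \<le> ereal (c \<bullet> x)"
        proof (cases "\<forall>k. 0 \<le> t' $ k")
          case True
          have "?f t' \<le> ereal (c \<bullet> x + t' \<bullet> restr ta x)" by (rule fval_le[OF True xX])
          moreover have "0 \<le> t' \<bullet> (w - restr ta x)"
            using True x(1) by (intro inner_nonneg_vec) (auto simp: wfeas_def)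
          ultimately show ?thesis using fr[OF True] by (simp add: inner_diff_right)
        next
          case False then show ?thesis using fval_neg[OF False, of tlA hdA orig dest c ta] by simp
        qed
      qed
      then show ?thesis using A by (meson ereal_less_eq(3) order_trans)
    qed
    have glo: "ereal (fr t0 - t0 \<bullet> w) \<le> ?g w"
      using gval_ge[of tlA hdA orig dest c ta t0 w] fr[OF TP[OF T0]] by simp
    define z where "z = real_of_ereal (?g w)"
    have gz: "?g w = ereal z" unfolding z_def using gup[OF T0] glo by (cases "?g w") auto
    have "(w, z) \<in> G"
      unfolding G_def Eg_def
    proof (intro InterI, clarsimp)
      fix t :: "real^'n" assume tT: "t \<in> T"
      have "ereal (fr t - t \<bullet> w) \<le> ?g w"
        using gval_ge[of tlA hdA orig dest c ta t w] fr[OF TP[OF tT]] by simp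
      then show "?g w \<le> ereal z \<and> t \<bullet> w + z = fr t" using gup[OF tT] gz by simp
    qed
    then show "w \<in> fst ` G" by (rule image_eqI[rotated]) simp
  next
    fix w assume "w \<in> fst ` G"
    then obtain y where y: "y \<in> G" "w = fst y" by blast
    then obtain z where wz: "(w,z) \<in> G" by (cases y) auto
    have gz: "?g w \<le> ereal z" and hz: "\<And>t. t \<in> T \<Longrightarrow> t \<bullet> w + z = fr t"
      using wz T0 unfolding G_def Eg_def by (auto split: if_splits)
    have glo: "ereal (fr t0 - t0 \<bullet> w) \<le> ?g w"
      using gval_ge[of tlA hdA orig dest c ta t0 w] fr[OF TP[OF T0]] by simp
    define \<gamma> where "\<gamma> = real_of_ereal (?g w)"
    have gg: "?g w = ereal \<gamma>" unfolding \<gamma>_def using gz glo by (cases "?g w") auto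
    have gle: "\<gamma> \<le> z" using gz gg by simp
    obtain x where x: "x \<in> ?X" "\<forall>k. x $ ta k \<le> w $ k" "c \<bullet> x \<le> \<gamma>"
      using dualA[OF c_nonneg gg] by blast
    show "w \<in> (\<Inter>t\<in>T. Wset tlA hdA orig dest c ta t)"
    proof
      fix t :: "real^'n" assume tT: "t \<in> T"
      have wf: "wfeas tlA hdA orig dest ta w x"
        using x by (auto simp: wfeas_def flows_def intro: order_trans)
      have "c \<bullet> x + t \<bullet> w \<le> c \<bullet> x' + t \<bullet> w'" if "wfeas tlA hdA orig dest ta w' x'" for w' x'
      proof -
        have x'X: "x' \<in> ?X" using that by (simp add: wfeas_def flows_def)
        have "?f t \<le> ereal (c \<bullet> x' + t \<bullet> restr ta x')" by (rule fval_le[OF TP[OF tT] x'X])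
        then have "fr t \<le> c \<bullet> x' + t \<bullet> restr ta x'" using fr[OF TP[OF tT]] by simp
        moreover have "0 \<le> t \<bullet> (w' - restr ta x')"
          using TP[OF tT] that by (intro inner_nonneg_vec) (auto simp: wfeas_def)
        moreover have "c \<bullet> x + t \<bullet> w \<le> fr t" using hz[OF tT] x(3) gle by simp
        ultimately show ?thesis by (simp add: inner_diff_right)
      qed
      then show "w \<in> Wset tlA hdA orig dest c ta t" unfolding Wset_def using wf by blast
    qed
  qed
  have "G face_of {(w, z). ?g w \<le> ereal z}" using Gface unfolding Eg_def .
  moreover have "G \<noteq> {}" using Gne by blast
  ultimately show ?thesis unfolding reaction_set_def
    by (intro exI[of _ G] conjI Gnv Gproj)
qed

end
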